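(* Let $\Phi\colon\mathcal{M}(2;\mathbb{C})\to\mathcal{M}(2;\mathbb{C})$ be a polynomial automorphism compatible with conjugation. Then the restriction $\Phi_{|\mathcal{D}}$ (identified with a polynomial automorphism of $\mathbb{C}^2$) is an elementary automorphism; in particular $\Phi$ preserves a polynomial fibration $\mathcal{L}\colon\mathcal{M}(2;\mathbb{C})\to\mathbb{C}$ transverse to $\mathcal{D}$, in the sense that $\mathcal{L}_{|\mathcal{D}}\colon\mathcal{D}\to\mathbb{C}$ is nonconstant.
   Context: $\mathcal{M}(2;\mathbb{C})$ is the space of complex $2\times2$ matrices and $\mathcal{D}=\{\mathrm{diag}(\lambda_1,\lambda_2)\}\simeq\mathbb{C}^2$ the diagonal matrices. A rational map $\Phi$ is compatible with conjugation if $\mathrm{A}\Phi(\mathrm{M})\mathrm{A}^{-1}=\Phi(\mathrm{A}\mathrm{M}\mathrm{A}^{-1})$ for all $\mathrm{A}\in\mathrm{GL}(2;\mathbb{C})$ whenever $\mathrm{M}$ and $\mathrm{A}\mathrm{M}\mathrm{A}^{-1}$ lie outside the indeterminacy locus of $\Phi$. Such a $\Phi$ maps $\mathcal{D}$ into $\mathcal{D}$. An elementary automorphism of $\mathbb{C}^2$ is one conjugate in the group of polynomial automorphisms to a map $(x,y)\mapsto(\alpha x+P(y),\beta y+\gamma)$ with $\alpha,\beta\in\mathbb{C}^*$, $\gamma\in\mathbb{C}$, $P\in\mathbb{C}[y]$. $\Phi$ preserves the fibration given by $\mathcal{L}$ if the foliation by level sets of $\mathcal{L}$ is invariant by $\Phi$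 (i.e. $\Phi$ maps level sets of $\mathcal{L}$ into level sets of $\mathcal{L}$). *)

theory Defs
  imports "HOL-Analysis.Analysis" "HOL-Computational_Algebra.Polynomial"
begin

type_synonym mat2 = "complex^2^2"

inductive poly_fun_M :: "(mat2 \<Rightarrow> complex) \<Rightarrow> bool" where
  pM_const: "poly_fun_M (\<lambda>M. c)"
| pM_coord: "poly_fun_M (\<lambda>M. M $ i $ j)"
| pM_add: "poly_fun_M f \<Longrightarrow> poly_fun_M g \<Longrightarrow> poly_fun_M (\<lambda>M. f M + g M)"
| pM_mult: "poly_fun_M f \<Longrightarrow> poly_fun_M g \<Longrightarrow> poly_fun_M (\<lambda>M. f M * g M)"

inductive poly_fun_C2 :: "(complex \<times> complex \<Rightarrow> complex) \<Rightarrow> bool" where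
  pC_const: "poly_fun_C2 (\<lambda>p. c)"
| pC_fst: "poly_fun_C2 fst"
| pC_snd: "poly_fun_C2 snd"
| pC_add: "poly_fun_C2 f \<Longrightarrow> poly_fun_C2 g \<Longrightarrow> poly_fun_C2 (\<lambda>p. f p + g p)"
| pC_mult: "poly_fun_C2 f \<Longrightarrow> poly_fun_C2 g \<Longrightarrow> poly_fun_C2 (\<lambda>p. f p * g p)"

definition poly_map_M :: "(mat2 \<Rightarrow> mat2) \<Rightarrow> bool" where
  "poly_map_M \<Phi> \<longleftrightarrow> (\<forall>i j. poly_fun_M (\<lambda>M. \<Phi> M $ i $ j))"

definition poly_map_C2 :: "(complex \<times> complex \<Rightarrow> complex \<times> complex) \<Rightarrow> bool" where
  "poly_map_C2 f \<longleftrightarrow> poly_fun_C2 (\<lambda>p. fst (f p)) \<and> poly_fun_C2 (\<lambda>p. snd (f p))"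

definition poly_aut_M :: "(mat2 \<Rightarrow> mat2) \<Rightarrow> bool" where
  "poly_aut_M \<Phi> \<longleftrightarrow> poly_map_M \<Phi> \<and>
     (\<exists>\<Psi>. poly_map_M \<Psi> \<and> (\<forall>M. \<Psi> (\<Phi> M) = M) \<and> (\<forall>M. \<Phi> (\<Psi> M) = M))"

definition poly_aut_C2 :: "(complex \<times> complex \<Rightarrow> complex \<times> complex) \<Rightarrow> bool" where
  "poly_aut_C2 f \<longleftrightarrow> poly_map_C2 f \<and>
     (\<exists>g. poly_map_C2 g \<and> (\<forall>p. g (f p) = p) \<and> (\<forall>p. f (g p) = p))"

text \<open>Compatibility with conjugation (a polynomial map has empty indeterminacy locus).\<close>
definition compatible_conj :: "(mat2 \<Rightarrow> mat2) \<Rightarrow> bool" where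
  "compatible_conj \<Phi> \<longleftrightarrow>
     (\<forall>A M. invertible A \<longrightarrow> A ** \<Phi> M ** matrix_inv A = \<Phi> (A ** M ** matrix_inv A))"

definition diagm :: "complex \<Rightarrow> complex \<Rightarrow> mat2" where
  "diagm a b = (\<chi> i j. if i = j then (if i = 1 then a else b) else 0)"

definition restr_diag :: "(mat2 \<Rightarrow> mat2) \<Rightarrow> complex \<times> complex \<Rightarrow> complex \<times> complex" where
  "restr_diag \<Phi> p = (\<Phi> (diagm (fst p) (snd p)) $ 1 $ 1, \<Phi> (diagm (fst p) (snd p)) $ 2 $ 2)"

definition elementary_aut :: "(complex \<times> complex \<Rightarrow> complex \<times> complex) \<Rightarrow> bool" where
  "elementary_aut f \<longleftrightarrow>
     (\<exists>\<psi> \<psi>i \<alpha> \<beta> \<gamma> (P :: complex poly).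
        poly_aut_C2 \<psi> \<and> (\<forall>p. \<psi>i (\<psi> p) = p) \<and> (\<forall>p. \<psi> (\<psi>i p) = p) \<and>
        \<alpha> \<noteq> 0 \<and> \<beta> \<noteq> 0 \<and>
        (\<forall>p. f p = \<psi>i ((\<lambda>(x, y). (\<alpha> * x + poly P y, \<beta> * y + \<gamma>)) (\<psi> p))))"

definition preserves_fibration :: "(mat2 \<Rightarrow> mat2) \<Rightarrow> (mat2 \<Rightarrow> complex) \<Rightarrow> bool" where
  "preserves_fibration \<Phi> L \<longleftrightarrow> (\<forall>c. \<exists>c'. \<forall>M. L M = c \<longrightarrow> L (\<Phi> M) = c')"

end

theory Submission
  imports Defs "HOL-Computational_Algebra.Fundamental_Theorem_Algebra"
begin


lemma pC_diff: "poly_fun_C2 f \<Longrightarrow> poly_fun_C2 g \<Longrightarrow> poly_fun_C2 (\<lambda>p. f p - g p)"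
proof -
  assume a: "poly_fun_C2 f" "poly_fun_C2 g"
  have "poly_fun_C2 (\<lambda>p. f p + (\<lambda>p. -1) p * g p)"
    by (intro pC_add pC_mult a pC_const)
  thus ?thesis by simp
qed

lemma pC_comp:
  assumes "poly_fun_C2 F" "poly_fun_C2 u" "poly_fun_C2 w"
  shows "poly_fun_C2 (\<lambda>p. F (u p, w p))"
  using assms(1) by induction (auto intro: poly_fun_C2.intros assms)

lemma pC_line:
  assumes "poly_fun_C2 F"
  shows "\<exists>P. \<forall>t. F (a + t*c, b + t*d) = poly P t"
  using assms
proof induction
  case (pC_const c) then show ?case by (rule exI[of _ "[:c:]"]) simp
next
  case pC_fst then show ?case by (rule exI[of _ "[:a,c:]"]) simp
next
  case pC_snd then show ?case by (rule exI[of _ "[:b,d:]"]) simp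
next
  case (pC_add f g) then obtain P Q where "\<forall>t. f (a + t*c, b + t*d) = poly P t" "\<forall>t. g (a + t*c, b + t*d) = poly Q t" by blast
  then show ?case by (intro exI[of _ "P+Q"]) simp
next
  case (pC_mult f g) then obtain P Q where "\<forall>t. f (a + t*c, b + t*d) = poly P t" "\<forall>t. g (a + t*c, b + t*d) = poly Q t" by blast
  then show ?case by (intro exI[of _ "P*Q"]) simp
qed

lemma pC_div:
  assumes "poly_fun_C2 F"
  shows "\<exists>G. poly_fun_C2 G \<and> (\<forall>x y. F (x,y) - F (y,y) = (x - y) * G (x,y))"
  using assms
proof induction
  case (pC_const c) then show ?case by (intro exI[of _ "\<lambda>p. 0"]) (auto intro: poly_fun_C2.intros)
next
  case pC_fst then show ?case by (intro exI[of _ "\<lambda>p. 1"]) (auto intro: poly_fun_C2.intros)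
next
  case pC_snd then show ?case by (intro exI[of _ "\<lambda>p. 0"]) (auto intro: poly_fun_C2.intros)
next
  case (pC_add f g) then obtain P Q where "poly_fun_C2 P" "poly_fun_C2 Q" "\<forall>x y. f (x,y) - f (y,y) = (x - y) * P (x,y)" "\<forall>x y. g (x,y) - g (y,y) = (x - y) * Q (x,y)" by blast
  then show ?case
    apply (intro exI[of _ "\<lambda>p. P p + Q p"] conjI allI)
     apply (auto intro: poly_fun_C2.intros)[1]
    by (metis (no_types, lifting) add_diff_add distrib_left)
next
  case (pC_mult f g) then obtain P Q where h: "poly_fun_C2 P" "poly_fun_C2 Q" "\<forall>x y. f (x,y) - f (y,y) = (x - y) * P (x,y)" "\<forall>x y. g (x,y) - g (y,y) = (x - y) * Q (x,y)" by blast
  show ?case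
  proof (intro exI[of _ "\<lambda>p. f p * Q p + g (snd p, snd p) * P p"] conjI allI)
    show "poly_fun_C2 (\<lambda>p. f p * Q p + g (snd p, snd p) * P p)"
      by (rule pC_add[OF poly_fun_C2.pC_mult[OF pC_mult.hyps(1) h(2)] poly_fun_C2.pC_mult[OF pC_comp[OF pC_mult.hyps(2) pC_snd pC_snd] h(1)]])
    fix x y
    have "f (x,y) * g (x,y) - f (y,y) * g (y,y) = f (x,y) * (g (x,y) - g (y,y)) + g (y,y) * (f (x,y) - f (y,y))"
      by (simp add: algebra_simps)
    also have "\<dots> = (x - y) * (f (x,y) * Q (x,y) + g (y,y) * P (x,y))"
      unfolding h(3)[rule_format] h(4)[rule_format] by (simp add: algebra_simps)
    finally show "f (x,y) * g (x,y) - f (y,y) * g (y,y) = (x - y) * (f (x,y) * Q (x,y) + g (snd (x,y), snd (x,y)) * P (x,y))" by simp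
  qed
qed

lemma poly_nozero_const:
  fixes P :: "complex poly"
  assumes "\<forall>t. poly P t \<noteq> 0"
  shows "poly P t = poly P 0"
proof -
  have "constant (poly P)"
    using fundamental_theorem_of_algebra assms by blast
  thus ?thesis unfolding constant_def by blast
qed

lemma pC_nozero_const:
  assumes "poly_fun_C2 F" "\<forall>p. F p \<noteq> 0"
  shows "F p = F (0,0)"
proof -
  obtain P where P: "\<forall>t. F (0 + t * fst p, 0 + t * snd p) = poly P t" using pC_line[OF assms(1)] by blast
  have "\<forall>t. poly P t \<noteq> 0" using P assms(2) by metis
  then have "poly P 1 = poly P 0" by (rule poly_nozero_const)
  thus ?thesis using P[rule_format, of 1] P[rule_format, of 0] by simp
qed

lemma pC_zero_offdiag:
  assumes "poly_fun_C2 F" "\<forall>x y. x \<noteq> y \<longrightarrow> F (x,y) = 0"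
  shows "F p = 0"
proof -
  obtain P where P: "\<forall>t. F (snd p + t*1, snd p + t*0) = poly P t" using pC_line[OF assms(1)] by blast
  have z: "poly P t = 0" if "t \<noteq> 0" for t
  proof -
    have "F (snd p + t*1, snd p + t*0) = 0" using assms(2) that by simp
    thus ?thesis using P by simp
  qed
  have "UNIV \<subseteq> insert 0 {t. poly P t = 0}" using z by auto
  hence "infinite {t. poly P t = 0}"
    using infinite_UNIV_char_0[where 'a=complex] by (metis finite_insert finite_subset)
  hence "P = 0" using poly_roots_finite by blast
  thus ?thesis using P[rule_format, of "fst p - snd p"] by simp
qed


lemma poly_deg1:
  fixes P :: "complex poly"
  assumes "degree P = 1"
  shows "poly P t = coeff P 0 + coeff P 1 * t" "coeff P 1 \<noteq> 0"
proof -
  show "poly P t = coeff P 0 + coeff P 1 * t"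
    using assms by (simp add: poly_altdef)
  have "P \<noteq> 0" using assms by auto
  hence "coeff P (degree P) \<noteq> 0" by simp
  thus "coeff P 1 \<noteq> 0" using assms by simp
qed

lemma core_B:
  fixes g k :: "complex \<times> complex \<Rightarrow> complex"
  assumes pg: "poly_fun_C2 g" and pk: "poly_fun_C2 k"
    and inv1: "\<forall>x y. k (g (x,y), g (y,x)) = x"
  shows "\<exists>\<beta>. \<beta> \<noteq> 0 \<and> (\<forall>x y. g (x,y) - g (y,x) = \<beta> * (x - y))"
proof -
  have pDg: "poly_fun_C2 (\<lambda>p. g p - g (snd p, fst p))"
    by (intro pC_diff pg pC_comp pC_snd pC_fst)
  have pDk: "poly_fun_C2 (\<lambda>p. k p - k (snd p, fst p))"
    by (intro pC_diff pk pC_comp pC_snd pC_fst)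
  obtain B where pB: "poly_fun_C2 B" and B: "\<forall>x y. (g (x,y) - g (y,x)) - (g (y,y) - g (y,y)) = (x - y) * B (x,y)"
    using pC_div[OF pDg] by auto
  obtain B' where pB': "poly_fun_C2 B'" and B': "\<forall>x y. (k (x,y) - k (y,x)) - (k (y,y) - k (y,y)) = (x - y) * B' (x,y)"
    using pC_div[OF pDk] by auto
  have Bx: "g (x,y) - g (y,x) = (x - y) * B (x,y)" for x y using B by simp
  have B'x: "k (x,y) - k (y,x) = (x - y) * B' (x,y)" for x y using B' by simp
  define Q where "Q = (\<lambda>p. B p * B' (g p, g (snd p, fst p)) - 1)"
  have pQ: "poly_fun_C2 Q" unfolding Q_def
    by (intro pC_diff pC_const poly_fun_C2.pC_mult pB pC_comp pB' pg pC_snd pC_fst)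
  have "Q (x,y) = 0" if "x \<noteq> y" for x y
  proof -
    have "x - y = k (g (x,y), g (y,x)) - k (g (y,x), g (x,y))" using inv1 by simp
    also have "\<dots> = (g (x,y) - g (y,x)) * B' (g (x,y), g (y,x))" by (rule B'x)
    also have "\<dots> = (x - y) * (B (x,y) * B' (g (x,y), g (y,x)))" by (simp add: Bx)
    finally have "(x - y) * 1 = (x - y) * (B (x,y) * B' (g (x,y), g (y,x)))" by simp
    hence "B (x,y) * B' (g (x,y), g (y,x)) = 1" using that by (metis mult_left_cancel right_minus_eq)
    thus ?thesis unfolding Q_def by simp
  qed
  hence Q0: "Q p = 0" for p using pC_zero_offdiag[OF pQ] by blast
  have Bnz: "\<forall>p. B p \<noteq> 0"
  proof
    fix p show "B p \<noteq> 0" using Q0[of p] unfolding Q_def by auto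
  qed
  have "B p = B (0,0)" for p by (rule pC_nozero_const[OF pB Bnz])
  thus ?thesis using Bx Bnz by (intro exI[of _ "B (0,0)"]) (auto simp: mult.commute)
qed

lemma core_S:
  fixes g k :: "complex \<times> complex \<Rightarrow> complex"
  assumes pg: "poly_fun_C2 g" and pk: "poly_fun_C2 k"
    and inv1: "\<forall>x y. k (g (x,y), g (y,x)) = x"
    and bet: "\<forall>x y. g (x,y) - g (y,x) = \<beta> * (x - y)"
  shows "\<exists>c E. c \<noteq> 0 \<and> (\<forall>x y. g (x,y) + g (y,x) = c * (x + y) + poly E (x - y))"
proof -
  define S where "S = (\<lambda>p. g p + g (snd p, fst p))"
  define T where "T = (\<lambda>p. k p + k (snd p, fst p))"
  have pS: "poly_fun_C2 S" unfolding S_def by (intro pC_add pg pC_comp pC_snd pC_fst)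
  have pT: "poly_fun_C2 T" unfolding T_def by (intro pC_add pk pC_comp pC_snd pC_fst)
  have lin: "\<exists>a b. b \<noteq> 0 \<and> (\<forall>t. S (v/2 + t*(1/2), -v/2 + t*(1/2)) = a + b * t)" for v
  proof -
    obtain P where P: "\<forall>t. S (v/2 + t*(1/2), -v/2 + t*(1/2)) = poly P t" using pC_line[OF pS] by blast
    obtain Q where Q: "\<forall>t. T (\<beta> * v/2 + t*(1/2), -\<beta> * v/2 + t*(1/2)) = poly Q t" using pC_line[OF pT] by blast
    have "poly (pcompose Q P) t = poly [:0,1:] t" for t
    proof -
      define x where "x = v/2 + t*(1/2)"
      define y where "y = -v/2 + t*(1/2)"
      have Pt: "poly P t = g (x,y) + g (y,x)" using P unfolding S_def x_def y_def by simp
      have "x - y = v" unfolding x_def y_def by (simp add: field_simps)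
      hence d: "g (x,y) - g (y,x) = \<beta> * v" using bet by metis
      have e1: "g (x,y) = \<beta> * v/2 + poly P t * (1/2)" using Pt d by (simp add: field_simps)
      have e2: "g (y,x) = -\<beta> * v/2 + poly P t * (1/2)" using Pt d by (simp add: field_simps)
      have "poly Q (poly P t) = T (g (x,y), g (y,x))" using Q e1 e2 by simp
      also have "\<dots> = x + y" unfolding T_def using inv1 by simp
      also have "\<dots> = t" unfolding x_def y_def by (simp add: field_simps)
      finally show ?thesis by (simp add: poly_pcompose)
    qed
    hence "pcompose Q P = [:0,1:]" using poly_eq_poly_eq_iff by blast
    hence "degree (pcompose Q P) = 1" by simp
    hence "degree Q * degree P = 1" by (simp add: degree_pcompose)
    hence dP: "degree P = 1" by simp
    show ?thesis using poly_deg1[OF dP] P by (intro exI[of _ "coeff P 0"] exI[of _ "coeff P 1"]) auto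
  qed
  obtain R where R: "\<forall>v. S (1/2 + v * (1/2), 1/2 + v * (-1/2)) = poly R v" using pC_line[OF pS] by blast
  obtain E where E: "\<forall>v. S (0 + v * (1/2), 0 + v * (-1/2)) = poly E v" using pC_line[OF pS] by blast
  have CE: "poly (R - E) v = S (v/2 + 1*(1/2), -v/2 + 1*(1/2)) - S (v/2 + 0*(1/2), -v/2 + 0*(1/2))" for v
  proof -
    have a1: "(1/2 + v * (1/2), 1/2 + v * (-1/2)) = (v/2 + 1*(1/2), -v/2 + 1*(1/2))" by (simp add: field_simps)
    have a2: "(0 + v * (1/2), 0 + v * (-1/2)) = (v/2 + 0*(1/2), -v/2 + 0*(1/2))" by (simp add: field_simps)
    have "poly (R - E) v = poly R v - poly E v" by simp
    also have "\<dots> = S (1/2 + v * (1/2), 1/2 + v * (-1/2)) - S (0 + v * (1/2), 0 + v * (-1/2))" using R E by simp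
    finally show ?thesis unfolding a1 a2 .
  qed
  have nz: "\<forall>v. poly (R - E) v \<noteq> 0"
  proof
    fix v obtain a b where "b \<noteq> 0" "\<forall>t. S (v/2 + t*(1/2), -v/2 + t*(1/2)) = a + b * t" using lin by blast
    hence "S (v/2 + 1*(1/2), -v/2 + 1*(1/2)) = a + b*1" "S (v/2 + 0*(1/2), -v/2 + 0*(1/2)) = a + b*0" by blast+
    thus "poly (R - E) v \<noteq> 0" unfolding CE using \<open>b \<noteq> 0\<close> by simp
  qed
  define c where "c = poly (R - E) 0"
  have cc: "poly (R - E) v = c" for v unfolding c_def by (rule poly_nozero_const[OF nz])
  have c0: "c \<noteq> 0" using nz cc by metis
  have main: "S (v/2 + t*(1/2), -v/2 + t*(1/2)) = c * t + poly E v" for v t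
  proof -
    obtain a b where "b \<noteq> 0" and ab: "\<forall>t. S (v/2 + t*(1/2), -v/2 + t*(1/2)) = a + b * t" using lin by blast
    have s1: "S (v/2 + 1*(1/2), -v/2 + 1*(1/2)) = a + b*1" "S (v/2 + 0*(1/2), -v/2 + 0*(1/2)) = a + b*0" using ab by blast+
    have "b = c" using CE[of v] cc[of v] unfolding s1 by simp
    moreover have "(0 + v * (1/2), 0 + v * (-1/2)) = (v/2 + 0*(1/2), -v/2 + 0*(1/2))" by (simp add: field_simps)
    hence "a = poly E v" using s1(2) E[rule_format, of v] by simp
    ultimately show ?thesis using ab by (simp add: algebra_simps)
  qed
  show ?thesis
  proof (intro exI[of _ c] exI[of _ E] conjI allI c0)
    fix x y
    have "S ((x - y)/2 + (x + y)*(1/2), -(x - y)/2 + (x + y)*(1/2)) = c * (x + y) + poly E (x - y)" by (rule main)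
    moreover have "(x - y)/2 + (x + y)*(1/2) = x" "-(x - y)/2 + (x + y)*(1/2) = y" by (simp_all add: field_simps)
    ultimately show "g (x,y) + g (y,x) = c * (x + y) + poly E (x - y)" unfolding S_def by simp
  qed
qed



definition m2 :: "complex \<Rightarrow> complex \<Rightarrow> complex \<Rightarrow> complex \<Rightarrow> mat2" where
  "m2 a b c d = (\<chi> i j. if i = 1 then (if j = 1 then a else b) else (if j = 1 then c else d))"

lemma m2_ent [simp]: "m2 a b c d $ 1 $ 1 = a" "m2 a b c d $ 1 $ 2 = b" "m2 a b c d $ 2 $ 1 = c" "m2 a b c d $ 2 $ 2 = d"
  by (simp_all add: m2_def)

lemma diagm_ent [simp]: "diagm a b $ 1 $ 1 = a" "diagm a b $ 1 $ 2 = 0" "diagm a b $ 2 $ 1 = 0" "diagm a b $ 2 $ 2 = b"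
  by (simp_all add: diagm_def)

lemma mat1_ent [simp]: "(mat 1 :: mat2) $ 1 $ 1 = 1" "(mat 1 :: mat2) $ 1 $ 2 = 0" "(mat 1 :: mat2) $ 2 $ 1 = 0" "(mat 1 :: mat2) $ 2 $ 2 = 1"
  by (simp_all add: mat_def)

lemma mat2_eq: "(X::mat2) = Y \<longleftrightarrow> X$1$1 = Y$1$1 \<and> X$1$2 = Y$1$2 \<and> X$2$1 = Y$2$1 \<and> X$2$2 = Y$2$2"
  by (auto simp: vec_eq_iff forall_2)

lemma mmult2: "((A::mat2) ** B) $ i $ j = A$i$1 * B$1$j + A$i$2 * B$2$j"
  by (simp add: matrix_matrix_mult_def sum_2)

lemma inv_m2:
  assumes "a * d - b * c \<noteq> 0"
  shows "invertible (m2 a b c d)"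
  unfolding invertible_right_inverse
proof -
  define D where "D = a * d - b * c"
  have D: "D \<noteq> 0" using assms D_def by simp
  have "m2 a b c d ** m2 (d/D) (-b/D) (-c/D) (a/D) = mat 1"
  proof -
    have "a*(d/D) + b*(-c/D) = (a*d - b*c)/D" "c*(-b/D) + d*(a/D) = (a*d - b*c)/D"
      by (simp_all add: diff_divide_distrib add_divide_distrib algebra_simps)
    hence "a*(d/D) + b*(-c/D) = 1" "c*(-b/D) + d*(a/D) = 1" using D unfolding D_def[symmetric] by simp_all
    moreover have "a*(-b/D) + b*(a/D) = 0" "c*(d/D) + d*(-c/D) = 0" by (simp_all add: algebra_simps)
    ultimately show ?thesis unfolding mat2_eq mmult2 by simp
  qed
  thus "\<exists>B. m2 a b c d ** B = mat 1" by blast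
qed

lemma inv_props:
  assumes "invertible (A::mat2)"
  shows "A ** matrix_inv A = mat 1" "matrix_inv A ** A = mat 1"
proof -
  have "\<exists>A'. A ** A' = mat 1 \<and> A' ** A = mat 1" using assms unfolding invertible_def by blast
  hence "A ** matrix_inv A = mat 1 \<and> matrix_inv A ** A = mat 1"
    unfolding matrix_inv_def by (rule someI_ex)
  thus "A ** matrix_inv A = mat 1" "matrix_inv A ** A = mat 1" by auto
qed

lemma conj_rel:
  assumes "compatible_conj \<Phi>" "invertible A" "M ** A = A ** D"
  shows "\<Phi> M ** A = A ** \<Phi> D"
proof -
  note i = inv_props[OF assms(2)]
  have "M = M ** A ** matrix_inv A" using i by (simp add: matrix_mul_assoc[symmetric])
  also have "\<dots> = A ** D ** matrix_inv A" using assms(3) by simp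
  finally have "\<Phi> M = A ** \<Phi> D ** matrix_inv A"
    using assms(1,2) unfolding compatible_conj_def by metis
  hence "\<Phi> M ** A = A ** \<Phi> D ** (matrix_inv A ** A)" by (simp add: matrix_mul_assoc)
  thus ?thesis using i by simp
qed

definition disc :: "mat2 \<Rightarrow> complex" where
  "disc M = (M$1$1 - M$2$2) * (M$1$1 - M$2$2) + 4 * (M$1$2 * M$2$1)"

lemma disc_tr: "disc M = trace M * trace M - 4 * det M"
  by (simp add: disc_def trace_def sum_2 det_2 algebra_simps)

lemma disc_sim:
  assumes "invertible A" "X ** A = A ** Y"
  shows "disc X = disc Y"
proof -
  note i = inv_props[OF assms(1)]
  have X: "X = A ** (Y ** matrix_inv A)" using assms(2) i
    by (metis matrix_mul_assoc matrix_mul_rid)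
  have "trace X = trace ((Y ** matrix_inv A) ** A)" unfolding X by (rule trace_mul_sym)
  hence t: "trace X = trace Y" using i by (simp add: matrix_mul_assoc[symmetric])
  have "det A * det (matrix_inv A) = 1" using i by (metis det_mul det_I)
  hence dA: "det A \<noteq> 0" by auto
  have "det X * det A = det A * det Y" using assms(2) by (metis det_mul)
  hence "det X = det Y" using dA by (simp add: mult.commute)
  thus ?thesis using t by (simp add: disc_tr)
qed



lemma M_m2: "M = m2 (M$1$1) (M$1$2) (M$2$1) (M$2$2)"
  unfolding mat2_eq by simp

lemma diagonalize_m2:
  assumes "(a - d) * (a - d) + 4 * (b * c) \<noteq> 0"
  shows "\<exists>A x y. invertible A \<and> m2 a b c d ** A = A ** diagm x y"
proof -
  define s where "s = csqrt ((a - d) * (a - d) + 4 * (b * c))"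
  have ss: "s * s = (a - d) * (a - d) + 4 * (b * c)" unfolding s_def by (metis power2_csqrt power2_eq_square)
  have s0: "s \<noteq> 0" using ss assms by auto
  define l1 where "l1 = (a + d + s) / 2"
  define l2 where "l2 = (a + d - s) / 2"
  have r1: "l1 * l1 - (a + d) * l1 + (a * d - b * c) = 0" unfolding l1_def using ss
    by (simp add: field_simps; algebra)
  have r2: "l2 * l2 - (a + d) * l2 + (a * d - b * c) = 0" unfolding l2_def using ss
    by (simp add: field_simps; algebra)
  have dl: "l1 - l2 = s" unfolding l1_def l2_def by (simp add: field_simps)
  show ?thesis
  proof (cases "b = 0")
    case False
    have "b * (l2 - a) - b * (l1 - a) = - (b * s)" using dl by (simp add: algebra_simps)
    hence inv: "invertible (m2 b b (l1 - a) (l2 - a))" using False s0 by (intro inv_m2) simp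
    have "m2 a b c d ** m2 b b (l1 - a) (l2 - a) = m2 b b (l1 - a) (l2 - a) ** diagm l1 l2"
    proof -
      have "c * b + d * (l1 - a) = (l1 - a) * l1" "c * b + d * (l2 - a) = (l2 - a) * l2"
        using r1 r2 by algebra+
      thus ?thesis unfolding mat2_eq mmult2 by (simp add: algebra_simps)
    qed
    thus ?thesis using inv by blast
  next
    case b: True
    show ?thesis
    proof (cases "c = 0")
      case False
      have "(l1 - d) * c - (l2 - d) * c = s * c" using dl by (simp add: algebra_simps)
      hence inv: "invertible (m2 (l1 - d) (l2 - d) c c)" using False s0 by (intro inv_m2) simp
      have "m2 a b c d ** m2 (l1 - d) (l2 - d) c c = m2 (l1 - d) (l2 - d) c c ** diagm l1 l2"
      proof -
        have "a * (l1 - d) = (l1 - d) * l1" "a * (l2 - d) = (l2 - d) * l2"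
          using r1 r2 b by algebra+
        thus ?thesis unfolding mat2_eq mmult2 using b by (simp add: algebra_simps)
      qed
      thus ?thesis using inv by blast
    next
      case True
      have inv: "invertible (m2 1 0 0 1)" by (intro inv_m2) simp
      have "m2 a b c d ** m2 1 0 0 1 = m2 1 0 0 1 ** diagm a d"
        unfolding mat2_eq mmult2 using b True by simp
      thus ?thesis using inv by blast
    qed
  qed
qed

lemma diagonalize:
  assumes "disc M \<noteq> 0"
  shows "\<exists>A x y. invertible A \<and> M ** A = A ** diagm x y"
  using diagonalize_m2[of "M$1$1" "M$2$2" "M$1$2" "M$2$1"] assms M_m2[of M]
  unfolding disc_def by metis

lemma comm_nil_disc:
  fixes X :: mat2
  assumes "e * e + b * c = 0" "e \<noteq> 0 \<or> b \<noteq> 0 \<or> c \<noteq> 0"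
    and "X ** m2 e b c (-e) = m2 e b c (-e) ** X"
  shows "disc X = 0"
proof -
  have h: "X$1$2 * c = b * X$2$1" "2 * e * X$1$2 = b * (X$1$1 - X$2$2)" "2 * e * X$2$1 = c * (X$1$1 - X$2$2)"
    using assms(3) unfolding mat2_eq mmult2 by (simp_all, algebra+)
  show ?thesis
  proof (cases "b = 0")
    case False
    have "b * b * disc X = 0" unfolding disc_def using h assms(1) by algebra
    thus ?thesis using False by simp
  next
    case b: True
    show ?thesis
    proof (cases "c = 0")
      case False
      have "c * c * disc X = 0" unfolding disc_def using h assms(1) by algebra
      thus ?thesis using False by simp
    next
      case True thus ?thesis using b assms by simp
    qed
  qed
qed



lemma pM_diff: "poly_fun_M f \<Longrightarrow> poly_fun_M g \<Longrightarrow> poly_fun_M (\<lambda>p. f p - g p)"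
proof -
  assume a: "poly_fun_M f" "poly_fun_M g"
  have "poly_fun_M (\<lambda>p. f p + (\<lambda>p. -1) p * g p)"
    by (intro pM_add pM_mult a pM_const)
  thus ?thesis by simp
qed

lemma poly_disc: "poly_fun_M disc"
proof -
  have "poly_fun_M (\<lambda>M. (M$1$1 - M$2$2) * (M$1$1 - M$2$2) + (\<lambda>M. 4) M * (M$1$2 * M$2$1))"
    by (intro pM_add pM_mult pM_diff pM_coord pM_const)
  thus ?thesis unfolding disc_def[abs_def] by simp
qed

lemma pC_half: "poly_fun_C2 f \<Longrightarrow> poly_fun_C2 (\<lambda>p. f p / 2)"
proof -
  assume a: "poly_fun_C2 f"
  have "poly_fun_C2 (\<lambda>p. f p * (\<lambda>p. 1/2) p)" by (intro pC_mult a pC_const)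
  thus ?thesis by simp
qed

lemma restr_poly:
  assumes "poly_fun_M F"
  shows "poly_fun_C2 (\<lambda>p. F (diagm (fst p) (snd p)))"
  using assms
proof induction
  case (pM_const c) show ?case by (rule pC_const)
next
  case (pM_coord i j)
  have "(\<lambda>p. diagm (fst p) (snd p) $ i $ j) = (if i = j then (if i = 1 then fst else snd) else (\<lambda>p. 0))"
    by (auto simp: diagm_def)
  thus ?case by (auto intro: pC_fst pC_snd pC_const)
next
  case (pM_add f g) show ?case by (rule pC_add[OF pM_add.IH])
next
  case (pM_mult f g) show ?case by (rule pC_mult[OF pM_mult.IH])
qed

lemma diag_form:
  assumes "compatible_conj \<Phi>"
  shows "\<Phi> (diagm x y) = diagm (\<Phi> (diagm x y) $ 1 $ 1) (\<Phi> (diagm y x) $ 1 $ 1)"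
proof -
  have i1: "invertible (m2 1 0 0 2)" by (intro inv_m2) simp
  have "diagm x y ** m2 1 0 0 2 = m2 1 0 0 2 ** diagm x y" unfolding mat2_eq mmult2 by simp
  hence c1: "\<Phi> (diagm x y) ** m2 1 0 0 2 = m2 1 0 0 2 ** \<Phi> (diagm x y)" by (rule conj_rel[OF assms i1])
  have i2: "invertible (m2 0 1 1 0)" by (intro inv_m2) simp
  have "diagm y x ** m2 0 1 1 0 = m2 0 1 1 0 ** diagm x y" unfolding mat2_eq mmult2 by simp
  hence c2: "\<Phi> (diagm y x) ** m2 0 1 1 0 = m2 0 1 1 0 ** \<Phi> (diagm x y)" by (rule conj_rel[OF assms i2])
  have "\<Phi> (diagm x y) $ 1 $ 2 = 0" "\<Phi> (diagm x y) $ 2 $ 1 = 0" using c1 unfolding mat2_eq mmult2 by simp_all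
  moreover have "\<Phi> (diagm x y) $ 2 $ 2 = \<Phi> (diagm y x) $ 1 $ 1" using c2 unfolding mat2_eq mmult2 by simp
  ultimately show ?thesis unfolding mat2_eq by simp
qed

lemma compat_inv:
  fixes \<Phi> \<Psi> :: "mat2 \<Rightarrow> mat2"
  assumes "compatible_conj \<Phi>" "\<forall>M. \<Psi> (\<Phi> M) = M" "\<forall>M. \<Phi> (\<Psi> M) = M"
  shows "compatible_conj \<Psi>"
  unfolding compatible_conj_def
proof (intro allI impI)
  fix A M :: mat2 assume "invertible A"
  hence "A ** \<Phi> (\<Psi> M) ** matrix_inv A = \<Phi> (A ** \<Psi> M ** matrix_inv A)"
    using assms(1) unfolding compatible_conj_def by blast
  hence "A ** M ** matrix_inv A = \<Phi> (A ** \<Psi> M ** matrix_inv A)" using assms(3) by simp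
  hence "\<Psi> (A ** M ** matrix_inv A) = \<Psi> (\<Phi> (A ** \<Psi> M ** matrix_inv A))" by simp
  hence "\<Psi> (A ** M ** matrix_inv A) = A ** \<Psi> M ** matrix_inv A" using assms(2) by simp
  thus "A ** \<Psi> M ** matrix_inv A = \<Psi> (A ** M ** matrix_inv A)" by simp
qed

lemma comm_shift:
  fixes X :: mat2
  assumes "X ** m2 (1 + e) b c (1 - e) = m2 (1 + e) b c (1 - e) ** X"
  shows "X ** m2 e b c (-e) = m2 e b c (-e) ** X"
proof -
  have h: "X$1$1 * (1 + e) + X$1$2 * c = (1 + e) * X$1$1 + b * X$2$1"
          "X$1$1 * b + X$1$2 * (1 - e) = (1 + e) * X$1$2 + b * X$2$2"
          "X$2$1 * (1 + e) + X$2$2 * c = c * X$1$1 + (1 - e) * X$2$1"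
          "X$2$1 * b + X$2$2 * (1 - e) = c * X$1$2 + (1 - e) * X$2$2"
    using assms unfolding mat2_eq mmult2 by simp_all
  show ?thesis unfolding mat2_eq mmult2 using h by simp (intro conjI; algebra)
qed
lemma comm_shift2:
  fixes X :: mat2
  assumes "X ** m2 1 1 0 1 = m2 1 1 0 1 ** X"
  shows "X ** m2 0 1 0 (-0) = m2 0 1 0 (-0) ** X"
  using assms unfolding mat2_eq mmult2 by simp

lemma disc_Phi:
  assumes cc: "compatible_conj \<Phi>"
    and bet: "\<forall>x y. \<Phi> (diagm x y) $ 1 $ 1 - \<Phi> (diagm y x) $ 1 $ 1 = \<beta> * (x - y)"
  shows "disc (\<Phi> M) = \<beta> * \<beta> * disc M"
proof (cases "disc M = 0")
  case False
  then obtain A x y where A: "invertible A" "M ** A = A ** diagm x y" using diagonalize by blast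
  have "\<Phi> M ** A = A ** \<Phi> (diagm x y)" by (rule conj_rel[OF cc A])
  hence "disc (\<Phi> M) = disc (\<Phi> (diagm x y))" by (rule disc_sim[OF A(1)])
  also have "\<dots> = disc (diagm (\<Phi> (diagm x y) $ 1 $ 1) (\<Phi> (diagm y x) $ 1 $ 1))" using diag_form[OF cc] by metis
  also have "\<dots> = (\<beta> * (x - y)) * (\<beta> * (x - y))" using bet unfolding disc_def by simp
  also have "\<dots> = \<beta> * \<beta> * disc (diagm x y)" unfolding disc_def by (simp add: algebra_simps)
  also have "disc (diagm x y) = disc M" using disc_sim[OF A] by simp
  finally show ?thesis .
next
  case True
  define a b c d where "a = M$1$1" "b = M$1$2" "c = M$2$1" "d = M$2$2"
  define e where "e = (a - d) / 2"
  have Mm: "M = m2 a b c d" using M_m2[of M] unfolding a_b_c_d_def .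
  have nil: "e * e + b * c = 0" using True unfolding disc_def e_def a_b_c_d_def by (simp add: field_simps)
  define X where "X = \<Phi> M"
  show ?thesis
  proof (cases "e \<noteq> 0 \<or> b \<noteq> 0 \<or> c \<noteq> 0")
    case nz: True
    have "(1 + e) * (1 - e) - b * c = 1" using nil by algebra
    hence iA: "invertible (m2 (1 + e) b c (1 - e))" by (intro inv_m2) simp
    have "M ** m2 (1 + e) b c (1 - e) = m2 (1 + e) b c (1 - e) ** M"
    proof -
      have ad: "a = d + 2 * e" unfolding e_def by (simp add: field_simps)
      show ?thesis unfolding Mm mat2_eq mmult2 ad by (simp add: algebra_simps)
    qed
    hence "X ** m2 (1 + e) b c (1 - e) = m2 (1 + e) b c (1 - e) ** X" unfolding X_def by (rule conj_rel[OF cc iA])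
    hence "X ** m2 e b c (-e) = m2 e b c (-e) ** X" by (rule comm_shift)
    hence "disc X = 0" using comm_nil_disc nil nz by blast
    thus ?thesis using True X_def by simp
  next
    case False
    hence z: "e = 0" "b = 0" "c = 0" by auto
    hence "a = d" unfolding e_def by simp
    have iA: "invertible (m2 1 1 0 1)" by (intro inv_m2) simp
    have "M ** m2 1 1 0 1 = m2 1 1 0 1 ** M"
      unfolding Mm mat2_eq mmult2 using z \<open>a = d\<close> by simp
    hence "X ** m2 1 1 0 1 = m2 1 1 0 1 ** X" unfolding X_def by (rule conj_rel[OF cc iA])
    hence "X ** m2 0 1 0 (-0) = m2 0 1 0 (-0) ** X" by (rule comm_shift2)
    hence "disc X = 0" using comm_nil_disc[of 0 1 0 X] by simp
    thus ?thesis using True X_def by simp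
  qed
qed



theorem theorem2p9:
  fixes \<Phi> :: "mat2 \<Rightarrow> mat2"
  assumes "poly_aut_M \<Phi>"
    and "compatible_conj \<Phi>"
  shows "elementary_aut (restr_diag \<Phi>) \<and>
         (\<exists>L. poly_fun_M L \<and> preserves_fibration \<Phi> L \<and>
              (\<exists>a b a' b'. L (diagm a b) \<noteq> L (diagm a' b')))"
proof -
  obtain \<Psi> where pPhi: "poly_map_M \<Phi>" and pPsi: "poly_map_M \<Psi>" and i1: "\<forall>M. \<Psi> (\<Phi> M) = M" and i2: "\<forall>M. \<Phi> (\<Psi> M) = M"
    using assms(1) unfolding poly_aut_M_def by blast
  have cP: "compatible_conj \<Phi>" by (rule assms(2))
  have cQ: "compatible_conj \<Psi>" by (rule compat_inv[OF cP i1 i2])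
  define g where "g = (\<lambda>p. \<Phi> (diagm (fst p) (snd p)) $ 1 $ 1)"
  define k where "k = (\<lambda>p. \<Psi> (diagm (fst p) (snd p)) $ 1 $ 1)"
  have pg: "poly_fun_C2 g" unfolding g_def
    using restr_poly[of "\<lambda>M. \<Phi> M $ 1 $ 1"] pPhi unfolding poly_map_M_def by blast
  have pk: "poly_fun_C2 k" unfolding k_def
    using restr_poly[of "\<lambda>M. \<Psi> M $ 1 $ 1"] pPsi unfolding poly_map_M_def by blast
  have dg: "\<Phi> (diagm x y) = diagm (g (x,y)) (g (y,x))" for x y
    unfolding g_def using diag_form[OF cP] by simp
  have dk: "\<Psi> (diagm x y) = diagm (k (x,y)) (k (y,x))" for x y
    unfolding k_def using diag_form[OF cQ] by simp
  have inv1: "\<forall>x y. k (g (x,y), g (y,x)) = x"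
  proof (intro allI)
    fix x y
    have "k (g (x,y), g (y,x)) = \<Psi> (diagm (g (x,y)) (g (y,x))) $ 1 $ 1" unfolding k_def by simp
    also have "\<dots> = x" using i1 dg[of x y] by (metis diagm_ent(1))
    finally show "k (g (x,y), g (y,x)) = x" .
  qed
  obtain \<beta> where b0: "\<beta> \<noteq> 0" and bet: "\<forall>x y. g (x,y) - g (y,x) = \<beta> * (x - y)"
    using core_B[OF pg pk inv1] by blast
  obtain c E where c0: "c \<noteq> 0" and cE: "\<forall>x y. g (x,y) + g (y,x) = c * (x + y) + poly E (x - y)"
    using core_S[OF pg pk inv1 bet] by blast
  have rd: "restr_diag \<Phi> p = (g p, g (snd p, fst p))" for p
    unfolding restr_diag_def using dg[of "fst p" "snd p"] by simp
  define \<psi> where "\<psi> = (\<lambda>p::complex\<times>complex. (fst p + snd p, fst p - snd p))"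
  define \<psi>i where "\<psi>i = (\<lambda>p::complex\<times>complex. ((fst p + snd p) / 2, (fst p - snd p) / 2))"
  have "poly_fun_C2 (\<lambda>p. fst p + snd p)" by (intro pC_add pC_fst pC_snd)
  moreover have "poly_fun_C2 (\<lambda>p. fst p - snd p)" by (intro pC_diff pC_fst pC_snd)
  ultimately have pm1: "poly_map_C2 \<psi>" and pm2: "poly_map_C2 \<psi>i"
    unfolding poly_map_C2_def \<psi>_def \<psi>i_def by (auto intro: pC_half)
  have l1: "\<forall>p. \<psi>i (\<psi> p) = p" unfolding \<psi>_def \<psi>i_def by (auto simp: field_simps)
  have l2: "\<forall>p. \<psi> (\<psi>i p) = p" unfolding \<psi>_def \<psi>i_def by (auto simp: field_simps)
  have pa: "poly_aut_C2 \<psi>" unfolding poly_aut_C2_def using pm1 pm2 l1 l2 by blast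
  have eq: "restr_diag \<Phi> p = \<psi>i ((\<lambda>(x, y). (c * x + poly E y, \<beta> * y + 0)) (\<psi> p))" for p
  proof -
    obtain x y where p: "p = (x,y)" by (cases p)
    have h1: "g (x,y) + g (y,x) = c * (x + y) + poly E (x - y)" using cE by blast
    have h2: "g (x,y) - g (y,x) = \<beta> * (x - y)" using bet by blast
    have "g (x,y) = ((c * (x + y) + poly E (x - y)) + \<beta> * (x - y)) / 2"
      unfolding h1[symmetric] h2[symmetric] by (simp add: field_simps)
    moreover have "g (y,x) = ((c * (x + y) + poly E (x - y)) - \<beta> * (x - y)) / 2"
      unfolding h1[symmetric] h2[symmetric] by (simp add: field_simps)
    ultimately show ?thesis unfolding p rd \<psi>_def \<psi>i_def by simp
  qed
  have elem: "elementary_aut (restr_diag \<Phi>)"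
    unfolding elementary_aut_def
    using pa l1 l2 c0 b0 eq by blast
  have dP: "disc (\<Phi> M) = \<beta> * \<beta> * disc M" for M
  proof (rule disc_Phi[OF cP])
    show "\<forall>x y. \<Phi> (diagm x y) $ 1 $ 1 - \<Phi> (diagm y x) $ 1 $ 1 = \<beta> * (x - y)"
      using bet unfolding g_def by simp
  qed
  have pf: "preserves_fibration \<Phi> disc"
    unfolding preserves_fibration_def
  proof (intro allI)
    fix c0 show "\<exists>c'. \<forall>M. disc M = c0 \<longrightarrow> disc (\<Phi> M) = c'"
      by (rule exI[of _ "\<beta> * \<beta> * c0"]) (simp add: dP)
  qed
  have "disc (diagm 1 0) \<noteq> disc (diagm 0 0)" unfolding disc_def by simp
  thus ?thesis using elem pf poly_disc by blast
qed


end
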